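(* Let $\Omega$ be a pointed solid closed convex cone in a finite-dimensional real inner product space $X$ such that $\Omega^*$ is locally smooth. Then for each $1\le j\le d$ the map $\mathcal P_j\to P_{j-1}\times X$, $(E,F)\mapsto(E,e_F(E))$, is a well-defined injection, where $e_F(E)$ is the normalised generator of the extreme ray $F^\perp\cap E^\circledast$ of $E^\circledast$.
   Context: $A^*=\{y:\langle y,a\rangle\ge0\ \forall a\in A\}$, $A^\circledast=A^*\cap\operatorname{span}A$. Faces of a convex set $C$: subsets $F$ such that every segment in $C$ with midpoint in $F$ lies in $F$. Let $0=n_0<\dots<n_d=\dim X$ be the dimensions of the faces of $\Omega^*$, $P_j$ the set of faces of $\Omega^*$ of dimension $n_{d-j}$, and $\mathcal P_j=\{(E,F)\in P_{j-1}\times P_j:E\supset F\}$. A face $E$ of a cone $C$ is modular if it contains a face of dimension $\max\{\dim G:G\text{ face of }C,\dim G<\dim E\}$; such $E$ is smooth if the relative interior of every face $F\subsetneq E$ of that dimension consists of regular points of $E$ (points with a unique supporting hyperplane); $C$ is locally smooth if all its modular faces are smooth. *)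

theory Defs
  imports "HOL-Analysis.Analysis"
begin

definition dual_cone :: "'a::real_inner set \<Rightarrow> 'a set" where
  "dual_cone A = {y. \<forall>a\<in>A. inner y a \<ge> 0}"

definition dual_cone_span :: "'a::real_inner set \<Rightarrow> 'a set" where
  "dual_cone_span A = dual_cone A \<inter> span A"

definition orth_comp :: "'a::real_inner set \<Rightarrow> 'a set" where
  "orth_comp F = {y. \<forall>x\<in>F. inner x y = 0}"

definition pointed_cone :: "'a::real_vector set \<Rightarrow> bool" where
  "pointed_cone C \<longleftrightarrow> C \<inter> uminus ` C \<subseteq> {0}"

text \<open>Faces are the (convex) faces in the sense of face_of; the empty face is excluded.
  The dimension of a face of a cone is the dimension of its linear span.\<close>

definition face_dims :: "'a::euclidean_space set \<Rightarrow> nat set" where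
  "face_dims C = {dim G | G. G face_of C \<and> G \<noteq> {}}"

definition dims_list :: "'a::euclidean_space set \<Rightarrow> nat list" where
  "dims_list C = sorted_list_of_set (face_dims C)"

definition face_dim_n :: "'a::euclidean_space set \<Rightarrow> nat \<Rightarrow> nat" where
  "face_dim_n C j = dims_list C ! j"

definition face_d :: "'a::euclidean_space set \<Rightarrow> nat" where
  "face_d C = length (dims_list C) - 1"

definition face_level :: "'a::euclidean_space set \<Rightarrow> nat \<Rightarrow> 'a set set" where
  "face_level C j = {F. F face_of C \<and> F \<noteq> {} \<and> dim F = face_dim_n C (face_d C - j)}"

definition face_pairs :: "'a::euclidean_space set \<Rightarrow> nat \<Rightarrow> ('a set \<times> 'a set) set" where
  "face_pairs C j = {(E, F). E \<in> face_level C (j - 1) \<and> F \<in> face_level C j \<and> F \<subseteq> E}"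

definition lower_dim :: "'a::euclidean_space set \<Rightarrow> 'a set \<Rightarrow> nat" where
  "lower_dim C E = Max {dim G | G. G face_of C \<and> G \<noteq> {} \<and> dim G < dim E}"

definition modular_face :: "'a::euclidean_space set \<Rightarrow> 'a set \<Rightarrow> bool" where
  "modular_face C E \<longleftrightarrow> E face_of C \<and> E \<noteq> {} \<and>
     (\<exists>G. G face_of C \<and> G \<noteq> {} \<and> dim G < dim E) \<and>
     (\<exists>G. G face_of C \<and> G \<noteq> {} \<and> G \<subseteq> E \<and> dim G = lower_dim C E)"

text \<open>Supporting hyperplane of E at x, taken inside the linear span of E
  (the ambient space of E).\<close>
definition supp_hyperplane :: "'a::euclidean_space set \<Rightarrow> 'a \<Rightarrow> 'a set \<Rightarrow> bool" where
  "supp_hyperplane E x H \<longleftrightarrow>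
     (\<exists>u c. u \<in> span E \<and> u \<noteq> 0 \<and> H = {y \<in> span E. inner u y = c} \<and>
            x \<in> H \<and> (\<forall>y\<in>E. inner u y \<ge> c))"

definition regular_point :: "'a::euclidean_space set \<Rightarrow> 'a \<Rightarrow> bool" where
  "regular_point E x \<longleftrightarrow> x \<in> E \<and> (\<exists>!H. supp_hyperplane E x H)"

definition smooth_face :: "'a::euclidean_space set \<Rightarrow> 'a set \<Rightarrow> bool" where
  "smooth_face C E \<longleftrightarrow>
     (\<forall>F. F face_of E \<and> F \<noteq> {} \<and> F \<noteq> E \<and> dim F = lower_dim C E \<longrightarrow>
          (\<forall>x\<in>rel_interior F. regular_point E x))"

definition locally_smooth :: "'a::euclidean_space set \<Rightarrow> bool" where
  "locally_smooth C \<longleftrightarrow> (\<forall>E. modular_face C E \<longrightarrow> smooth_face C E)"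

definition ray_gen :: "'a::real_normed_vector \<Rightarrow> 'a set" where
  "ray_gen e = {t *\<^sub>R e | t. t \<ge> 0}"

definition norm_gen :: "'a::euclidean_space set \<Rightarrow> 'a set \<Rightarrow> 'a" where
  "norm_gen F E = (THE e. norm e = 1 \<and> orth_comp F \<inter> dual_cone_span E = ray_gen e)"

end

theory Submission
  imports Defs
begin

lemma dual_cone_convex: "convex (dual_cone A)"
  unfolding convex_def dual_cone_def
  by (auto simp: inner_add_left intro!: add_nonneg_nonneg mult_nonneg_nonneg)

lemma dual_cone_zero: "0 \<in> dual_cone A"
  unfolding dual_cone_def by auto

lemma dual_cone_double: "x \<in> dual_cone A \<Longrightarrow> 2 *\<^sub>R x \<in> dual_cone A"
  unfolding dual_cone_def by auto

lemma face_cone: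
  fixes C :: "'a::euclidean_space set"
  assumes "F face_of C" "0 \<in> C" "\<forall>x\<in>C. 2 *\<^sub>R x \<in> C" "x \<in> F"
  shows "0 \<in> F \<and> 2 *\<^sub>R x \<in> F"
proof (cases "x = 0")
  case True
  then show ?thesis using assms by simp
next
  case False
  have xC: "x \<in> C" using assms face_of_imp_subset by blast
  have "x \<in> open_segment 0 (2 *\<^sub>R x)"
    unfolding in_segment using False
    by (intro conjI exI[of _ "1/2"]) auto
  then show ?thesis using face_ofD[OF assms(1) _ assms(2) _ assms(4)] assms(3) xC by blast
qed

lemma relint_orth:
  fixes F :: "'a::euclidean_space set"
  assumes "x \<in> rel_interior F" "\<forall>y\<in>F. inner v y \<ge> 0" "inner v x = 0" "y \<in> F"
  shows "inner v y = 0"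
proof -
  obtain e where e: "e > 0" "ball x e \<inter> affine hull F \<subseteq> F"
    using assms(1) mem_rel_interior_ball by blast
  have xF: "x \<in> F" using assms(1) rel_interior_subset by blast
  show ?thesis
  proof (cases "y = x")
    case True then show ?thesis using assms by simp
  next
    case False
    define t where "t = e / (2 * norm (x - y))"
    have np: "norm (x - y) > 0" using False by simp
    have tp: "t > 0" unfolding t_def using e np by simp
    define z where "z = x + t *\<^sub>R (x - y)"
    have "dist x z = t * norm (x - y)" unfolding z_def dist_norm using tp by simp
    also have "\<dots> = e / 2" unfolding t_def using np by simp
    finally have "z \<in> ball x e" using e by simp
    moreover have "z \<in> affine hull F"
    proof -
      have "z = (1 + t) *\<^sub>R x + (- t) *\<^sub>R y" unfolding z_def by (simp add: algebra_simps)
      moreover have "(1 + t) + (- t) = 1" by simp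
      ultimately show ?thesis
        using mem_affine[OF affine_affine_hull, of x F y "1+t" "-t"] xF assms(4)
        by (simp add: hull_inc)
    qed
    ultimately have "z \<in> F" using e by blast
    then have "inner v z \<ge> 0" using assms by blast
    then have "t * inner v x - t * inner v y \<ge> 0"
      unfolding z_def by (simp add: inner_add_right inner_diff_right algebra_simps assms(3))
    then have "inner v y \<le> 0" using tp assms(3) by (simp add: mult_le_0_iff)
    then show ?thesis using assms xF by force
  qed
qed

lemma key:
  fixes E :: "'a::euclidean_space set"
  assumes E0: "0 \<in> E" and Ed: "\<forall>x\<in>E. 2 *\<^sub>R x \<in> E"
    and Fface: "F face_of E" and Fne: "F \<noteq> {}"
    and reg: "\<forall>x\<in>rel_interior F. regular_point E x"
  shows "\<exists>u. u \<noteq> 0 \<and> orth_comp F \<inter> dual_cone_span E = ray_gen u"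
    and "(orth_comp F \<inter> dual_cone_span E) face_of dual_cone_span E"
proof -
  have Fconv: "convex F" using Fface face_of_imp_convex by blast
  obtain x where x: "x \<in> rel_interior F" using Fne Fconv rel_interior_eq_empty by blast
  have xF: "x \<in> F" using x rel_interior_subset by blast
  have FE: "F \<subseteq> E" using Fface face_of_imp_subset by blast
  have xE: "x \<in> E" using xF FE by blast
  have orth: "\<And>v y. \<forall>y\<in>E. inner v y \<ge> 0 \<Longrightarrow> inner v x = 0 \<Longrightarrow> y \<in> F \<Longrightarrow> inner v y = 0"
    using relint_orth[OF x] FE by blast
  let ?D = "dual_cone_span E"
  let ?N = "orth_comp F \<inter> ?D"
  have Nx: "?N = ?D \<inter> {v. x \<bullet> v = 0}"
  proof
    show "?N \<subseteq> ?D \<inter> {v. x \<bullet> v = 0}" using xF unfolding orth_comp_def by auto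
    show "?D \<inter> {v. x \<bullet> v = 0} \<subseteq> ?N"
    proof
      fix v assume v: "v \<in> ?D \<inter> {v. x \<bullet> v = 0}"
      then have "\<forall>y\<in>E. inner v y \<ge> 0" unfolding dual_cone_span_def dual_cone_def by auto
      moreover have "inner v x = 0" using v by (simp add: inner_commute)
      ultimately have "\<forall>y\<in>F. inner v y = 0" using orth by blast
      then show "v \<in> ?N" using v unfolding orth_comp_def by (auto simp: inner_commute)
    qed
  qed
  have Dconv: "convex ?D" unfolding dual_cone_span_def
    by (intro convex_Int dual_cone_convex subspace_imp_convex subspace_span)
  have xD: "\<And>v. v \<in> ?D \<Longrightarrow> x \<bullet> v \<ge> 0"
  proof -
    fix v assume "v \<in> ?D"
    then have "v \<bullet> x \<ge> 0" using xE unfolding dual_cone_span_def dual_cone_def by blast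
    then show "x \<bullet> v \<ge> 0" by (simp add: inner_commute)
  qed
  have "(?D \<inter> {v. x \<bullet> v = 0}) face_of ?D"
    by (rule face_of_Int_supporting_hyperplane_ge[OF Dconv xD])
  then show "?N face_of ?D" by (simp only: Nx)
  have ex1: "\<exists>!H. supp_hyperplane E x H" using reg x unfolding regular_point_def by blast
  obtain H0 where H0: "supp_hyperplane E x H0"
    and uniq: "\<And>H. supp_hyperplane E x H \<Longrightarrow> H = H0"
    using ex1E[OF ex1] by metis
  from H0 obtain u c where u: "u \<in> span E" "u \<noteq> 0" "H0 = {y \<in> span E. inner u y = c}"
    "x \<in> H0" "\<forall>y\<in>E. inner u y \<ge> c"
    unfolding supp_hyperplane_def by blast
  have uxc: "inner u x = c" using u by simp
  have "c \<le> 0" using u(5) E0 by force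
  moreover have "2 * c \<ge> c" using u(5) Ed xE uxc by force
  ultimately have c0: "c = 0" by simp
  have uN: "u \<in> ?N"
  proof -
    have "\<forall>y\<in>F. inner u y = 0" using orth u(5) c0 uxc by blast
    then show ?thesis using u c0 unfolding orth_comp_def dual_cone_span_def dual_cone_def
      by (auto simp: inner_commute)
  qed
  have "?N = ray_gen u"
  proof
    show "ray_gen u \<subseteq> ?N"
    proof
      fix w assume "w \<in> ray_gen u"
      then obtain t where t: "t \<ge> 0" "w = t *\<^sub>R u" unfolding ray_gen_def by blast
      then show "w \<in> ?N" using uN
        unfolding orth_comp_def dual_cone_span_def dual_cone_def
        by (auto simp: span_mul)
    qed
    show "?N \<subseteq> ray_gen u"
    proof
      fix v assume v: "v \<in> ?N"
      show "v \<in> ray_gen u"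
      proof (cases "v = 0")
        case True then show ?thesis unfolding ray_gen_def by (auto intro!: exI[of _ 0])
      next
        case False
        have vE: "v \<in> span E" "\<forall>y\<in>E. inner v y \<ge> 0"
          using v unfolding dual_cone_span_def dual_cone_def by auto
        have vx: "inner v x = 0" using v xF unfolding orth_comp_def by (auto simp: inner_commute)
        have "supp_hyperplane E x {y \<in> span E. inner v y = 0}"
          unfolding supp_hyperplane_def using vE vx False xE
          by (intro exI[of _ v] exI[of _ 0]) (auto simp: span_base)
        then have Heq: "{y \<in> span E. inner v y = 0} = {y \<in> span E. inner u y = 0}"
          using uniq u(3) c0 by blast
        define s where "s = inner v u / inner u u"
        have uu: "inner u u > 0" using u(2) by simp
        define w where "w = v - s *\<^sub>R u"
        have wE: "w \<in> span E" unfolding w_def using vE u by (simp add: span_diff span_mul)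
        have uw: "inner u w = 0" unfolding w_def s_def using uu
          by (simp add: inner_diff_right inner_commute)
        then have "inner v w = 0" using Heq wE by blast
        then have "inner w w = 0" using uw unfolding w_def
          by (simp add: inner_diff_left inner_commute)
        then have vs: "v = s *\<^sub>R u" unfolding w_def by simp
        have "s \<ge> 0"
        proof (rule ccontr)
          assume "\<not> s \<ge> 0"
          then have sn: "s < 0" by simp
          have "\<forall>y\<in>E. inner u y = 0"
          proof
            fix y assume y: "y \<in> E"
            have "s * inner u y \<ge> 0" using vE(2) y vs by auto
            then have "inner u y \<le> 0" using sn by (simp add: mult_le_0_iff zero_le_mult_iff)
            then show "inner u y = 0" using u(5) c0 y by force
          qed
          then have "orthogonal u u"
            using orthogonal_to_span[OF u(1), of u] unfolding orthogonal_def by blast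
          then show False using u(2) unfolding orthogonal_def by simp
        qed
        then show ?thesis using vs unfolding ray_gen_def by blast
      qed
    qed
  qed
  then show "\<exists>u. u \<noteq> 0 \<and> ?N = ray_gen u" using u(2) by blast
qed

lemma ray_gen_norm:
  fixes u :: "'a::euclidean_space"
  assumes "u \<noteq> 0"
  shows "ray_gen u = ray_gen (u /\<^sub>R norm u)"
proof
  show "ray_gen u \<subseteq> ray_gen (u /\<^sub>R norm u)"
  proof
    fix w assume "w \<in> ray_gen u"
    then obtain t where "t \<ge> 0" "w = t *\<^sub>R u" unfolding ray_gen_def by blast
    then show "w \<in> ray_gen (u /\<^sub>R norm u)" unfolding ray_gen_def using assms
      by (intro CollectI exI[of _ "t * norm u"]) auto
  qed
  show "ray_gen (u /\<^sub>R norm u) \<subseteq> ray_gen u"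
  proof
    fix w assume "w \<in> ray_gen (u /\<^sub>R norm u)"
    then obtain t where "t \<ge> 0" "w = t *\<^sub>R (u /\<^sub>R norm u)" unfolding ray_gen_def by blast
    then show "w \<in> ray_gen u" unfolding ray_gen_def using assms
      by (intro CollectI exI[of _ "t / norm u"]) (auto simp: divide_inverse)
  qed
qed

lemma ray_gen_unique:
  fixes e :: "'a::euclidean_space"
  assumes "norm e = 1" "norm e' = 1" "ray_gen e' = ray_gen e"
  shows "e' = e"
proof -
  have "e' \<in> ray_gen e'" unfolding ray_gen_def by (auto intro!: exI[of _ 1])
  then obtain t where t: "t \<ge> 0" "e' = t *\<^sub>R e" using assms(3) unfolding ray_gen_def by blast
  then have "norm e' = t" using assms(1) by simp
  then show ?thesis using t assms(1,2) by simp
qed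

lemma G_eq:
  fixes C :: "'a::euclidean_space set"
  assumes C0: "0 \<in> C" and Cd: "\<forall>x\<in>C. 2 *\<^sub>R x \<in> C"
    and Eface: "E face_of C" and Fface: "F face_of C" and Fne: "F \<noteq> {}" and FE: "F \<subseteq> E"
    and e: "e \<in> orth_comp F \<inter> dual_cone_span E" "e \<noteq> 0"
    and dimc: "\<And>G. G face_of C \<Longrightarrow> G \<noteq> {} \<Longrightarrow> dim G < dim E \<Longrightarrow> dim G \<le> dim F"
  shows "E \<inter> {y. e \<bullet> y = 0} = F"
proof -
  let ?G = "E \<inter> {y. e \<bullet> y = 0}"
  have Econv: "convex E" using Eface face_of_imp_convex by blast
  have ege: "\<And>y. y \<in> E \<Longrightarrow> e \<bullet> y \<ge> 0" using e unfolding dual_cone_span_def dual_cone_def by auto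
  have GE: "?G face_of E" using face_of_Int_supporting_hyperplane_ge[OF Econv, where a=e and b=0] ege by blast
  have GC: "?G face_of C" using face_of_trans[OF GE Eface] .
  have FG: "F \<subseteq> ?G" using FE e unfolding orth_comp_def by (auto simp: inner_commute)
  have Gne: "?G \<noteq> {}" using FG Fne by blast
  have "dim ?G < dim E"
  proof -
    have le: "dim ?G \<le> dim E" by (rule dim_subset) blast
    have "dim ?G \<noteq> dim E"
    proof
      assume "dim ?G = dim E"
      then have sp: "span ?G = span E" by (intro dim_eq_span) auto
      have "e \<in> span ?G" using e sp unfolding dual_cone_span_def by auto
      then have "orthogonal e e"
        using orthogonal_to_span[of e ?G e] unfolding orthogonal_def by blast
      then show False using e(2) unfolding orthogonal_def by simp
    qed
    then show ?thesis using le by simp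
  qed
  then have d1: "dim ?G \<le> dim F" using dimc GC Gne by blast
  have d2: "dim F \<le> dim ?G" using FG by (rule dim_subset)
  have FfG: "F face_of ?G" using face_of_subset[OF Fface FG] GC face_of_imp_subset by blast
  obtain x where "x \<in> F" using Fne by blast
  then have F0: "0 \<in> F" using face_cone[OF Fface C0 Cd] by blast
  have G0: "0 \<in> ?G" using F0 FG by blast
  have aF: "aff_dim F = int (dim F)" using aff_dim_eq_dim[of 0 F] F0 by (simp add: hull_inc)
  have aG: "aff_dim ?G = int (dim ?G)" using aff_dim_eq_dim[of 0 ?G] G0 by (simp add: hull_inc)
  show ?thesis
  proof (rule ccontr)
    assume "?G \<noteq> F"
    then have "aff_dim F < aff_dim ?G"
      using face_of_aff_dim_lt[OF face_of_imp_convex[OF GC] FfG] by auto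
    then show False using aF aG d1 d2 by simp
  qed
qed

lemma list_dims:
  fixes S :: "nat set"
  assumes fin: "finite S" and i: "Suc i < length (sorted_list_of_set S)"
  defines "L \<equiv> sorted_list_of_set S"
  shows "L ! i < L ! Suc i" "L ! i \<in> S"
    "\<And>k. k \<in> S \<Longrightarrow> k < L ! Suc i \<Longrightarrow> k \<le> L ! i"
proof -
  have ss: "sorted_wrt (<) L" unfolding L_def by (rule strict_sorted_list_of_set)
  have setL: "set L = S" unfolding L_def using fin by simp
  have iL: "Suc i < length L" using i unfolding L_def .
  show "L ! i < L ! Suc i" using ss iL by (simp add: sorted_wrt_iff_nth_less)
  show "L ! i \<in> S" using setL iL by (metis Suc_lessD nth_mem)
  fix k assume k: "k \<in> S" "k < L ! Suc i"
  then obtain m where m: "m < length L" "k = L ! m" using setL by (metis in_set_conv_nth)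
  have "m \<le> i"
  proof (rule ccontr)
    assume "\<not> m \<le> i"
    then have "Suc i \<le> m" by simp
    then have "L ! Suc i \<le> L ! m"
      using ss m(1) by (metis le_eq_less_or_eq sorted_wrt_iff_nth_less)
    then show False using k m by simp
  qed
  then show "k \<le> L ! i"
    using ss iL m by (metis le_eq_less_or_eq less_imp_le sorted_wrt_iff_nth_less Suc_lessD)
qed

theorem mainTheorem11:
  fixes \<Omega> :: "'a::euclidean_space set" and j :: nat
  assumes "closed \<Omega>" and "convex \<Omega>" and "cone \<Omega>"
    and "pointed_cone \<Omega>" and "interior \<Omega> \<noteq> {}"
    and "locally_smooth (dual_cone \<Omega>)"
    and "1 \<le> j" and "j \<le> face_d (dual_cone \<Omega>)"
  shows "(\<forall>(E, F) \<in> face_pairs (dual_cone \<Omega>) j.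
            (\<exists>!e. norm e = 1 \<and> orth_comp F \<inter> dual_cone_span E = ray_gen e) \<and>
            (orth_comp F \<inter> dual_cone_span E) face_of dual_cone_span E)
         \<and> inj_on (\<lambda>(E, F). (E, norm_gen F E)) (face_pairs (dual_cone \<Omega>) j)"
proof -
  let ?C = "dual_cone \<Omega>"
  let ?S = "face_dims ?C"
  let ?L = "dims_list ?C"
  define i where "i = face_d ?C - j"
  have C0: "0 \<in> ?C" by (rule dual_cone_zero)
  have Cd: "\<forall>x\<in>?C. 2 *\<^sub>R x \<in> ?C" using dual_cone_double by blast
  have fin: "finite ?S"
    by (rule finite_subset[of _ "{..DIM('a)}"]) (auto simp: face_dims_def dim_subset_UNIV)
  have iL: "Suc i < length (sorted_list_of_set ?S)"
    using assms(7,8) unfolding i_def face_d_def dims_list_def by simp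
  have lvlF: "face_dim_n ?C (face_d ?C - j) = ?L ! i" unfolding face_dim_n_def i_def ..
  have lvlE: "face_dim_n ?C (face_d ?C - (j - 1)) = ?L ! Suc i"
    using assms(7,8) unfolding face_dim_n_def i_def by (simp add: Suc_diff_le)
  note LD = list_dims[OF fin iL, folded dims_list_def]
  have dimc: "\<And>E F G. (E, F) \<in> face_pairs ?C j \<Longrightarrow> G face_of ?C \<Longrightarrow> G \<noteq> {} \<Longrightarrow> dim G < dim E
      \<Longrightarrow> dim G \<le> dim F"
  proof -
    fix E F G assume EF: "(E, F) \<in> face_pairs ?C j" and G: "G face_of ?C" "G \<noteq> {}" "dim G < dim E"
    have "dim E = ?L ! Suc i" "dim F = ?L ! i"
      using EF lvlE lvlF unfolding face_pairs_def face_level_def by auto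
    moreover have "dim G \<in> ?S" using G unfolding face_dims_def by blast
    ultimately show "dim G \<le> dim F" using LD(3) G(3) by simp
  qed
  have part1: "\<And>E F. (E, F) \<in> face_pairs ?C j \<Longrightarrow>
      (\<exists>u. u \<noteq> 0 \<and> orth_comp F \<inter> dual_cone_span E = ray_gen u) \<and>
      (orth_comp F \<inter> dual_cone_span E) face_of dual_cone_span E"
  proof -
    fix E F assume EF: "(E, F) \<in> face_pairs ?C j"
    have E: "E face_of ?C" "E \<noteq> {}" "dim E = ?L ! Suc i"
      and F: "F face_of ?C" "F \<noteq> {}" "dim F = ?L ! i" and FE: "F \<subseteq> E"
      using EF lvlE lvlF unfolding face_pairs_def face_level_def by auto
    have lowd: "lower_dim ?C E = ?L ! i"
      unfolding lower_dim_def
    proof (rule Max_eqI)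
      show "finite {dim G |G. G face_of ?C \<and> G \<noteq> {} \<and> dim G < dim E}"
        by (rule finite_subset[OF _ fin]) (auto simp: face_dims_def)
      show "\<And>y. y \<in> {dim G |G. G face_of ?C \<and> G \<noteq> {} \<and> dim G < dim E} \<Longrightarrow> y \<le> ?L ! i"
        using dimc[OF EF] F(3) by auto
      show "?L ! i \<in> {dim G |G. G face_of ?C \<and> G \<noteq> {} \<and> dim G < dim E}"
        using F E LD(1) by (intro CollectI exI[of _ F]) auto
    qed
    have "modular_face ?C E"
      unfolding modular_face_def using E F FE lowd LD(1) by (metis order_refl)
    then have sm: "smooth_face ?C E" using assms(6) unfolding locally_smooth_def by blast
    have FfE: "F face_of E" using face_of_subset[OF F(1) FE] E(1) face_of_imp_subset by blast
    have "F \<noteq> E" using E(3) F(3) LD(1) by auto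
    then have reg: "\<forall>x\<in>rel_interior F. regular_point E x"
      using sm FfE F(2) F(3) lowd unfolding smooth_face_def by auto
    obtain x where "x \<in> E" using E(2) by blast
    then have E0: "0 \<in> E" using face_cone[OF E(1) C0 Cd] by blast
    have Ed: "\<forall>x\<in>E. 2 *\<^sub>R x \<in> E" using face_cone[OF E(1) C0 Cd] by blast
    show "(\<exists>u. u \<noteq> 0 \<and> orth_comp F \<inter> dual_cone_span E = ray_gen u) \<and>
      (orth_comp F \<inter> dual_cone_span E) face_of dual_cone_span E"
      using key[OF E0 Ed FfE F(2) reg] by blast
  qed
  have uniqe: "\<And>E F. (E, F) \<in> face_pairs ?C j \<Longrightarrow>
      (\<exists>!e. norm e = 1 \<and> orth_comp F \<inter> dual_cone_span E = ray_gen e)"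
  proof -
    fix E F assume EF: "(E, F) \<in> face_pairs ?C j"
    obtain u where u: "u \<noteq> 0" "orth_comp F \<inter> dual_cone_span E = ray_gen u"
      using part1[OF EF] by blast
    show "\<exists>!e. norm e = 1 \<and> orth_comp F \<inter> dual_cone_span E = ray_gen e"
    proof (rule ex1I[of _ "u /\<^sub>R norm u"])
      have n1: "norm (u /\<^sub>R norm u) = 1" using u(1) by simp
      have r: "ray_gen u = ray_gen (u /\<^sub>R norm u)" by (rule ray_gen_norm[OF u(1)])
      show "norm (u /\<^sub>R norm u) = 1 \<and> orth_comp F \<inter> dual_cone_span E = ray_gen (u /\<^sub>R norm u)"
        using n1 r u(2) by metis
      fix e' assume e': "norm e' = 1 \<and> orth_comp F \<inter> dual_cone_span E = ray_gen e'"
      then have "ray_gen e' = ray_gen (u /\<^sub>R norm u)" using r u(2) e' by metis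
      then show "e' = u /\<^sub>R norm u"
        using ray_gen_unique[OF n1, of e'] e' by blast
    qed
  qed
  have ng: "\<And>E F. (E, F) \<in> face_pairs ?C j \<Longrightarrow>
      norm_gen F E \<in> orth_comp F \<inter> dual_cone_span E \<and> norm_gen F E \<noteq> 0"
  proof -
    fix E F assume EF: "(E, F) \<in> face_pairs ?C j"
    have "norm (norm_gen F E) = 1 \<and> orth_comp F \<inter> dual_cone_span E = ray_gen (norm_gen F E)"
      unfolding norm_gen_def by (rule theI'[OF uniqe[OF EF]])
    moreover have "norm_gen F E \<in> ray_gen (norm_gen F E)"
      unfolding ray_gen_def by (auto intro!: exI[of _ 1])
    ultimately show "norm_gen F E \<in> orth_comp F \<inter> dual_cone_span E \<and> norm_gen F E \<noteq> 0"
      by auto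
  qed
  have GF: "\<And>E F. (E, F) \<in> face_pairs ?C j \<Longrightarrow> E \<inter> {y. norm_gen F E \<bullet> y = 0} = F"
  proof -
    fix E F assume EF: "(E, F) \<in> face_pairs ?C j"
    have E: "E face_of ?C" and F: "F face_of ?C" "F \<noteq> {}" and FE: "F \<subseteq> E"
      using EF unfolding face_pairs_def face_level_def by auto
    show "E \<inter> {y. norm_gen F E \<bullet> y = 0} = F"
      using G_eq[OF C0 Cd E F FE, of "norm_gen F E"] ng[OF EF] dimc[OF EF] by blast
  qed
  have inj: "inj_on (\<lambda>(E, F). (E, norm_gen F E)) (face_pairs ?C j)"
  proof (rule inj_onI)
    fix p q assume p: "p \<in> face_pairs ?C j" and q: "q \<in> face_pairs ?C j"
      and eq: "(\<lambda>(E, F). (E, norm_gen F E)) p = (\<lambda>(E, F). (E, norm_gen F E)) q"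
    obtain E F where pe: "p = (E, F)" by (cases p)
    obtain E' F' where qe: "q = (E', F')" by (cases q)
    have "E' = E" "norm_gen F' E' = norm_gen F E" using eq pe qe by auto
    then have "F = F'" using GF[OF p[unfolded pe]] GF[OF q[unfolded qe]] by simp
    then show "p = q" using pe qe \<open>E' = E\<close> by simp
  qed
  have "\<forall>(E, F) \<in> face_pairs ?C j.
            (\<exists>!e. norm e = 1 \<and> orth_comp F \<inter> dual_cone_span E = ray_gen e) \<and>
            (orth_comp F \<inter> dual_cone_span E) face_of dual_cone_span E"
  proof (rule ballI)
    fix p assume p: "p \<in> face_pairs ?C j"
    obtain E F where pe: "p = (E, F)" by (cases p)
    have EF: "(E, F) \<in> face_pairs ?C j" using p pe by simp
    have "(\<exists>!e. norm e = 1 \<and> orth_comp F \<inter> dual_cone_span E = ray_gen e) \<and>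
            (orth_comp F \<inter> dual_cone_span E) face_of dual_cone_span E"
      using uniqe[OF EF] conjunct2[OF part1[OF EF]] by (rule conjI)
    then show "case p of (E, F) \<Rightarrow> (\<exists>!e. norm e = 1 \<and> orth_comp F \<inter> dual_cone_span E = ray_gen e) \<and>
            (orth_comp F \<inter> dual_cone_span E) face_of dual_cone_span E" using pe by simp
  qed
  then show ?thesis using inj by (rule conjI)
qed

end
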